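(* Consider the setting and the algorithm described in the context (with its parameters $0<\beta<2$, $\nu>0$, $0<q<1$, $\delta_0>0$, $\theta_0>0$, $\gamma_0=1$, $\varepsilon>0$). Then: (i) $\|z^{k+1}\|\le \ell+1$ for all $k\ge 0$; (ii) in every iteration, the search for the smallest $j_k\in\{0,1,2,\dots\}$ with $\theta_{k+1}>0$ terminates after finitely many steps, so the algorithm is well defined; moreover $\gamma_{k+1}\le\gamma_k$ for all $k\ge0$; (iii) there exist a constant $\gamma>0$ and an index $K_0\ge 0$ such that for all $k\ge K_0$: $\gamma_k=\gamma$, $\delta_k=\delta:=2\nu+L_{\nabla h}+\frac{2\|A\|^2}{\gamma}$, and $\|z^{k+1}\|\le\min\left(\frac{\varepsilon}{\gamma},\sqrt{\frac{2\varepsilon}{\gamma}}\right)$.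
   Context: Setting: $\mathcal{S}\subseteq\mathbb{R}^n$ is nonempty, convex and compact; $A:\mathbb{R}^n\to\mathbb{R}^s$ and $K:\mathbb{R}^n\to\mathbb{R}^p$ are linear with adjoints $A^*,K^*$ and operator norms $\|A\|,\|K\|$; $g:\mathbb{R}^s\to\mathbb{R}\cup\{+\infty\}$ is proper, convex, lower semicontinuous; $h:\mathbb{R}^n\to\mathbb{R}$ is differentiable on an open set containing $\mathcal{S}$ with $\nabla h$ Lipschitz there with constant $L_{\nabla h}$; $f:\mathbb{R}^p\to\mathbb{R}\cup\{+\infty\}$ is proper, convex, lower semicontinuous with $K(\mathcal{S})\subseteq\operatorname{int}(\operatorname{dom}f)$ and $f(Kx)>0$ for all $x\in\mathcal{S}$; $\mathcal{S}\cap A^{-1}(\operatorname{dom}g)\neq\emptyset$ and $\alpha:=\inf_{x\in\mathcal{S}}\{g(Ax)+h(x)\}>0$. Moreover $A(\mathcal{S})\subseteq\operatorname{dom}(\partial g)$ and there is $\ell>0$ with $\operatorname{dist}(0,\partial g(Ax))\le\ell$ for all $x\in\mathcal{S}$. Notation: $g^*$ is the Fenchel conjugate of $g$; $\iota_{\mathcal{S}}$ the indicator function of $\mathcal{S}$; $\operatorname{Proj}_{\mathcal{S}}$ the Euclidean projection; for a proper convex lsc $\varphi$ and $\kappa>0$, $\operatorname{prox}_{\varphi,\kappa}(x)=\arg\min_y\{\varphi(y)+\frac{1}{2\kappa}\|y-x\|^2\}$. Define $\Psi(x,z,u,\delta,\gamma):=\langle z,Ax\rangle-g^*(z)+h(x)+\iota_{\mathcal{S}}(x)+\frac{\delta}{2}\|x-u\|^2-\frac{\gamma}{2}\|z\|^2$.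 Algorithm (Adaptive FSPS): given $0<\beta<2$, $\nu>0$, $0<q<1$, $\delta_0>0$, $\theta_0>0$, $\gamma_0=1$, $\varepsilon>0$ and a starting point $(x^0,z^0,u^0)$, for $k\ge0$: choose $y^{k+1}\in\partial f(Kx^k)$; set $x^{k+1}:=\operatorname{Proj}_{\mathcal{S}}\big(u^k+\frac{\theta_k}{\delta_k}K^*y^{k+1}-\frac1{\delta_k}\nabla h(x^k)-\frac1{\delta_k}A^*z^k\big)$; set $u^{k+1}:=(1-\beta)u^k+\beta x^{k+1}$; find the smallest $j_k\in\{0,1,2,\dots\}$ such that, with $\gamma_{k,j_k}:=\gamma_kq^{j_k}$ and $z^{k+1,j_k}:=\operatorname{prox}_{g^*,1/\gamma_{k,j_k}}(Ax^{k+1}/\gamma_{k,j_k})$, one has $\theta_{k+1}:=\Psi(x^{k+1},z^{k+1,j_k},u^{k+1},\delta_k,\gamma_{k,j_k})/f(Kx^{k+1})>0$; set $\gamma_{k+1}:=\gamma_{k,j_k}$, $\delta_{k+1}:=2\nu+L_{\nabla h}+2\|A\|^2/\gamma_{k+1}$, $z^{k+1}:=z^{k+1,j_k}$; if $\|z^{k+1}\|>\min(\varepsilon/\gamma_{k+1},\sqrt{2\varepsilon/\gamma_{k+1}})$, then replace $\gamma_{k+1}$ by $\gamma_{k+1}q$ and recompute $\delta_{k+1}:=2\nu+L_{\nabla h}+2\|A\|^2/\gamma_{k+1}$. *)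

theory Defs
  imports "HOL-Analysis.Analysis"
begin

definition proper_fun :: "('a \<Rightarrow> ereal) \<Rightarrow> bool" where
  "proper_fun f \<longleftrightarrow> (\<forall>x. f x \<noteq> -\<infinity>) \<and> (\<exists>x. f x \<noteq> \<infinity>)"

definition convex_fun :: "('a::real_vector \<Rightarrow> ereal) \<Rightarrow> bool" where
  "convex_fun f \<longleftrightarrow> convex {(x, r::real). f x \<le> ereal r}"

definition lsc_fun :: "('a::topological_space \<Rightarrow> ereal) \<Rightarrow> bool" where
  "lsc_fun f \<longleftrightarrow> (\<forall>x. f x \<le> Liminf (at x) f)"

definition fconj :: "('a::real_inner \<Rightarrow> ereal) \<Rightarrow> 'a \<Rightarrow> ereal" where
  "fconj g z = (SUP x. ereal (z \<bullet> x) - g x)"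

definition subdiff :: "('a::real_inner \<Rightarrow> ereal) \<Rightarrow> 'a \<Rightarrow> 'a set" where
  "subdiff f x = {v. f x < \<infinity> \<and> (\<forall>w. f x + ereal (v \<bullet> (w - x)) \<le> f w)}"

definition prox :: "('a::real_normed_vector \<Rightarrow> ereal) \<Rightarrow> real \<Rightarrow> 'a \<Rightarrow> 'a" where
  "prox phi \<kappa> x = (THE y. \<forall>w. phi y + ereal (norm (y - x) ^ 2 / (2 * \<kappa>))
                               \<le> phi w + ereal (norm (w - x) ^ 2 / (2 * \<kappa>)))"

definition fsps_Psi ::
  "'n::euclidean_space set \<Rightarrow> ('n \<Rightarrow> 's::euclidean_space) \<Rightarrow> ('s \<Rightarrow> ereal) \<Rightarrow> ('n \<Rightarrow> real)
   \<Rightarrow> 'n \<Rightarrow> 's \<Rightarrow> 'n \<Rightarrow> real \<Rightarrow> real \<Rightarrow> ereal" where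
  "fsps_Psi S A g h x z u \<delta> \<gamma> =
     (if x \<in> S then ereal (z \<bullet> A x) - fconj g z
        + ereal (h x + \<delta> / 2 * norm (x - u) ^ 2 - \<gamma> / 2 * norm z ^ 2)
      else \<infinity>)"

text \<open>The search index j_k is the least j with theta_{k+1} > 0 (the step is possible only
  if such a j exists).\<close>
definition fsps_step ::
  "'n::euclidean_space set \<Rightarrow> ('n \<Rightarrow> 's::euclidean_space) \<Rightarrow> ('n \<Rightarrow> 'p::euclidean_space)
   \<Rightarrow> ('s \<Rightarrow> ereal) \<Rightarrow> ('n \<Rightarrow> real) \<Rightarrow> ('n \<Rightarrow> 'n) \<Rightarrow> real \<Rightarrow> ('p \<Rightarrow> ereal)
   \<Rightarrow> real \<Rightarrow> real \<Rightarrow> real \<Rightarrow> real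
   \<Rightarrow> 'n \<Rightarrow> 's \<Rightarrow> 'n \<Rightarrow> real \<Rightarrow> real \<Rightarrow> real
   \<Rightarrow> 'n \<Rightarrow> 's \<Rightarrow> 'n \<Rightarrow> real \<Rightarrow> real \<Rightarrow> real \<Rightarrow> bool" where
  "fsps_step S A K g h gradh Lh f \<beta> \<nu> q \<epsilon> x z u \<gamma> \<delta> \<theta> x' z' u' \<gamma>' \<delta>' \<theta>' \<longleftrightarrow>
     (\<exists>y. y \<in> subdiff f (K x) \<and>
        x' = closest_point S (u + (\<theta> / \<delta>) *\<^sub>R adjoint K y - (1 / \<delta>) *\<^sub>R gradh x
                                - (1 / \<delta>) *\<^sub>R adjoint A z) \<and>
        u' = (1 - \<beta>) *\<^sub>R u + \<beta> *\<^sub>R x' \<and>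
        (let zc = (\<lambda>j::nat. prox (fconj g) (1 / (\<gamma> * q ^ j)) ((1 / (\<gamma> * q ^ j)) *\<^sub>R A x'));
             th = (\<lambda>j::nat. fsps_Psi S A g h x' (zc j) u' \<delta> (\<gamma> * q ^ j) / f (K x'));
             j = (LEAST j. 0 < th j);
             \<gamma>1 = \<gamma> * q ^ j
         in 0 < th j \<and> \<theta>' = real_of_ereal (th j) \<and> z' = zc j \<and>
            \<gamma>' = (if norm z' > min (\<epsilon> / \<gamma>1) (sqrt (2 * \<epsilon> / \<gamma>1)) then \<gamma>1 * q else \<gamma>1) \<and>
            \<delta>' = 2 * \<nu> + Lh + 2 * (onorm A) ^ 2 / \<gamma>'))"

end

theory Submission
  imports Defs
begin


lemma subdiff_nonempty_interior:
  fixes f :: "'p::euclidean_space \<Rightarrow> ereal"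
  assumes pf: "proper_fun f" and cf: "convex_fun f" and pint: "p \<in> interior {w. f w < \<infinity>}"
  shows "subdiff f p \<noteq> {}"
proof -
  have ninf: "\<And>w. f w \<noteq> -\<infinity>" using pf by (auto simp: proper_fun_def)
  obtain e where e: "e > 0" "ball p e \<subseteq> {w. f w < \<infinity>}" using pint mem_interior by blast
  have "p \<in> ball p e" using e by simp
  then have "f p < \<infinity>" using e by blast
  then obtain F where F: "f p = ereal F" using ninf[of p] by (cases "f p") auto
  define T where "T = {(w, r::real). f w < ereal r}"
  have E: "convex {(x, r::real). f x \<le> ereal r}" using cf by (simp add: convex_fun_def)
  have cT: "convex T"
  proof (rule convexI)
    fix x y :: "'p \<times> real" and u v :: real
    assume xT: "x \<in> T" and yT: "y \<in> T" and u: "0 \<le> u" and v: "0 \<le> v" and uv: "u + v = 1"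
    obtain w1 r1 where x: "x = (w1, r1)" by (cases x)
    obtain w2 r2 where y: "y = (w2, r2)" by (cases y)
    have l1: "f w1 < ereal r1" using xT x T_def by auto
    have l2: "f w2 < ereal r2" using yT y T_def by auto
    obtain f1 where f1: "f w1 = ereal f1" using l1 ninf[of w1] by (cases "f w1") auto
    obtain f2 where f2: "f w2 = ereal f2" using l2 ninf[of w2] by (cases "f w2") auto
    have "(w1, f1) \<in> {(x, r::real). f x \<le> ereal r}" "(w2, f2) \<in> {(x, r::real). f x \<le> ereal r}"
      using f1 f2 by auto
    from convexD[OF E this u v uv]
    have "f (u *\<^sub>R w1 + v *\<^sub>R w2) \<le> ereal (u * f1 + v * f2)" by simp
    moreover have "u * f1 + v * f2 < u * r1 + v * r2"
    proof -
      have "f1 < r1" "f2 < r2" using l1 l2 f1 f2 by auto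
      then have "u * f1 \<le> u * r1" "v * f2 \<le> v * r2" using u v by (auto intro: mult_left_mono)
      moreover have "u > 0 \<or> v > 0" using u v uv by auto
      ultimately show ?thesis using \<open>f1 < r1\<close> \<open>f2 < r2\<close>
        by (smt (verit) mult_strict_left_mono)
    qed
    ultimately show "u *\<^sub>R x + v *\<^sub>R y \<in> T" using x y T_def
      by (auto intro: order.strict_trans1)
  qed
  have "(p, F + 1) \<in> T" using F T_def by auto
  then have Tne: "T \<noteq> {}" by auto
  have disj: "{(p, F)} \<inter> T = {}" using F T_def by auto
  obtain a b where ab: "a \<noteq> 0" "\<forall>x\<in>{(p,F)}. inner a x \<le> b" "\<forall>x\<in>T. inner a x \<ge> b"
    using separating_hyperplane_sets[OF convex_singleton cT _ Tne disj] by blast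
  obtain a1 a0 where a: "a = (a1, a0)" by (cases a)
  have hp: "a1 \<bullet> p + a0 * F \<le> b" using ab(2) a by (simp add: inner_Pair)
  have hT: "\<And>w r. f w < ereal r \<Longrightarrow> a1 \<bullet> w + a0 * r \<ge> b" using ab(3) a T_def by (auto simp: inner_Pair)
  have "a1 \<bullet> p + a0 * (F + 1) \<ge> b" using hT[of p "F+1"] F by simp
  with hp have a0: "a0 \<ge> 0" by (simp add: algebra_simps)
  have a0pos: "a0 > 0"
  proof (rule ccontr)
    assume "\<not> a0 > 0"
    then have a00: "a0 = 0" using a0 by auto
    then have a1: "a1 \<noteq> 0" using ab(1) a by (auto simp: zero_prod_def)
    define w where "w = p - (e / 2 / norm a1) *\<^sub>R a1"
    have "dist p w = e / 2" using a1 e by (simp add: w_def dist_norm)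
    then have "w \<in> ball p e" using e by simp
    then have "f w < \<infinity>" using e by blast
    then obtain fw where "f w = ereal fw" using ninf[of w] by (cases "f w") auto
    then have "a1 \<bullet> w \<ge> b" using hT[of w "fw + 1"] a00 by simp
    moreover have "a1 \<bullet> w = a1 \<bullet> p - e / 2 * norm a1"
      using a1 by (simp add: w_def inner_diff_right dot_square_norm power2_eq_square)
    moreover have "e * norm a1 > 0" using e a1 by simp
    ultimately show False using hp a00 by simp
  qed
  define v where "v = - (1 / a0) *\<^sub>R a1"
  have "v \<in> subdiff f p"
    unfolding subdiff_def
  proof (intro CollectI conjI allI)
    show "f p < \<infinity>" using F by simp
    fix w
    show "f p + ereal (v \<bullet> (w - p)) \<le> f w"
    proof (cases "f w = \<infinity>")
      case True then show ?thesis by simp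
    next
      case False
      then obtain fw where fw: "f w = ereal fw" using ninf[of w] by (cases "f w") auto
      have "F + v \<bullet> (w - p) \<le> fw"
      proof (rule field_le_epsilon)
        fix t :: real assume t: "t > 0"
        have "a1 \<bullet> w + a0 * (fw + t) \<ge> b" using hT[of w "fw + t"] fw t by simp
        with hp have "a0 * F - a1 \<bullet> (w - p) \<le> a0 * (fw + t)" by (simp add: inner_diff_right algebra_simps)
        then have "(a0 * F - a1 \<bullet> (w - p)) / a0 \<le> fw + t" using a0pos by (simp add: divide_le_eq mult.commute)
        moreover have "(a0 * F - a1 \<bullet> (w - p)) / a0 = F + v \<bullet> (w - p)"
          using a0pos by (simp add: v_def field_simps)
        ultimately show "F + v \<bullet> (w - p) \<le> fw + t" by simp
      qed
      then show ?thesis using F fw by simp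
    qed
  qed
  then show ?thesis by auto
qed



lemma fconj_ge: "ereal (y \<bullet> w) - g w \<le> fconj g y"
  unfolding fconj_def by (rule SUP_upper) simp

lemma proper_ninf: "proper_fun g \<Longrightarrow> g w \<noteq> -\<infinity>"
  by (auto simp: proper_fun_def)

lemma subdiff_finite:
  assumes "proper_fun g" "v \<in> subdiff g w"
  obtains G where "g w = ereal G"
  using assms proper_ninf[OF assms(1), of w] by (cases "g w") (auto simp: subdiff_def)

lemma fconj_subdiff:
  assumes pg: "proper_fun g" and v: "v \<in> subdiff g w" and G: "g w = ereal G"
  shows "fconj g v = ereal (v \<bullet> w - G)"
proof (rule antisym)
  show "fconj g v \<le> ereal (v \<bullet> w - G)"
    unfolding fconj_def
  proof (rule SUP_least)
    fix x
    have "g w + ereal (v \<bullet> (x - w)) \<le> g x" using v by (auto simp: subdiff_def)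
    then show "ereal (v \<bullet> x) - g x \<le> ereal (v \<bullet> w - G)"
      using G proper_ninf[OF pg, of x]
      by (cases "g x") (auto simp: inner_diff_right)
  qed
  show "ereal (v \<bullet> w - G) \<le> fconj g v" using fconj_ge[of v w g] G by simp
qed

lemma fconj_convex:
  assumes pg: "proper_fun g" and c1: "fconj g y1 = ereal c1" and c2: "fconj g y2 = ereal c2"
    and u: "0 \<le> u" and v: "0 \<le> v" and uv: "u + v = 1"
  shows "fconj g (u *\<^sub>R y1 + v *\<^sub>R y2) \<le> ereal (u * c1 + v * c2)"
  unfolding fconj_def
proof (rule SUP_least)
  fix x
  show "ereal ((u *\<^sub>R y1 + v *\<^sub>R y2) \<bullet> x) - g x \<le> ereal (u * c1 + v * c2)"
  proof (cases "g x")
    case (real G)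
    have "ereal (y1 \<bullet> x) - g x \<le> ereal c1" using fconj_ge[of y1 x g] c1 by simp
    then have a: "y1 \<bullet> x - G \<le> c1" using real by simp
    have "ereal (y2 \<bullet> x) - g x \<le> ereal c2" using fconj_ge[of y2 x g] c2 by simp
    then have b: "y2 \<bullet> x - G \<le> c2" using real by simp
    have "(u *\<^sub>R y1 + v *\<^sub>R y2) \<bullet> x - G = u * (y1 \<bullet> x - G) + v * (y2 \<bullet> x - G)"
    proof -
      have "G = u * G + v * G" using uv by (metis distrib_right mult_1)
      then show ?thesis by (simp add: inner_add_left right_diff_distrib)
    qed
    also have "\<dots> \<le> u * c1 + v * c2" using a b u v by (intro add_mono mult_left_mono) auto
    finally show ?thesis using real by simp
  next
    case PInf then show ?thesis by simp
  next
    case MInf then show ?thesis using proper_ninf[OF pg, of x] by simp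
  qed
qed

lemma fconj_lower:
  assumes pg: "proper_fun g" and G: "g w = ereal G"
  shows "fconj g y \<ge> ereal (y \<bullet> w - G)"
  using fconj_ge[of y w g] G by simp



lemma parallelogram_mid:
  fixes z1 z2 c :: "'a::real_inner"
  shows "norm ((1/2) *\<^sub>R z1 + (1/2) *\<^sub>R z2 - c)^2 =
         (norm (z1 - c)^2 + norm (z2 - c)^2) / 2 - norm (z1 - z2)^2 / 4"
proof -
  have e: "(1/2) *\<^sub>R z1 + (1/2) *\<^sub>R z2 - c = (1/2) *\<^sub>R ((z1 - c) + (z2 - c))"
  proof -
    have "c = (1/2) *\<^sub>R c + (1/2) *\<^sub>R c" by (simp flip: scaleR_add_left)
    then show ?thesis by (simp add: algebra_simps)
  qed
  have e2: "z1 - z2 = (z1 - c) - (z2 - c)" by simp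
  define p where "p = z1 - c"
  define q where "q = z2 - c"
  have "norm ((1/2) *\<^sub>R (p + q))^2 = (norm p ^2 + norm q^2) / 2 - norm (p - q)^2 / 4"
    by (simp add: power2_norm_eq_inner inner_add_left inner_add_right inner_diff_left inner_diff_right inner_commute field_simps)
  then show ?thesis using e e2 p_def q_def by metis
qed

lemma fconj_le_iff:
  assumes pg: "proper_fun g"
  shows "fconj g y + ereal Q \<le> ereal r \<longleftrightarrow>
         (\<forall>x. g x \<noteq> \<infinity> \<longrightarrow> y \<bullet> x - real_of_ereal (g x) + Q \<le> r)"
proof -
  have "fconj g y + ereal Q \<le> ereal r \<longleftrightarrow> fconj g y \<le> ereal (r - Q)"
    by (cases "fconj g y") auto
  also have "\<dots> \<longleftrightarrow> (\<forall>x. ereal (y \<bullet> x) - g x \<le> ereal (r - Q))"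
    unfolding fconj_def by (simp add: SUP_le_iff)
  also have "\<dots> \<longleftrightarrow> (\<forall>x. g x \<noteq> \<infinity> \<longrightarrow> y \<bullet> x - real_of_ereal (g x) + Q \<le> r)"
  proof -
    have "ereal (y \<bullet> x) - g x \<le> ereal (r - Q) \<longleftrightarrow> (g x \<noteq> \<infinity> \<longrightarrow> y \<bullet> x - real_of_ereal (g x) + Q \<le> r)" for x
      using proper_ninf[OF pg, of x] by (cases "g x") auto
    then show ?thesis by auto
  qed
  finally show ?thesis .
qed

lemma quad_bound:
  fixes t a b :: real
  assumes "t\<^sup>2 \<le> a * t + b" "0 \<le> a" "0 \<le> b" "0 \<le> t"
  shows "t \<le> a + b + 1"
proof (rule ccontr)
  assume "\<not> t \<le> a + b + 1"
  then have t: "t > a + b + 1" by simp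
  then have h1: "t * t > (a + b + 1) * t" using assms by (intro mult_strict_right_mono) auto
  have h2: "(a + b + 1) * t = a * t + (b + 1) * t" by (simp add: algebra_simps)
  have "(b + 1) * t \<ge> b + 1" using t assms by (simp add: mult_le_cancel_left1)
  then have "a * t + (b + 1) * t > a * t + b" by simp
  then show False using assms(1) h1 h2 by (simp add: power2_eq_square)
qed

lemma prox_exists_unique:
  fixes g :: "'s::euclidean_space \<Rightarrow> ereal"
  assumes pg: "proper_fun g" and v0: "v0 \<in> subdiff g w0" and kap: "\<kappa> > 0"
  shows "\<exists>!y. \<forall>w. fconj g y + ereal (norm (y - c) ^ 2 / (2 * \<kappa>))
                     \<le> fconj g w + ereal (norm (w - c) ^ 2 / (2 * \<kappa>))"
proof -
  define Q where "Q y = norm (y - c) ^ 2 / (2 * \<kappa>)" for y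
  define \<Phi> where "\<Phi> y = fconj g y + ereal (Q y)" for y
  obtain G0 where G0: "g w0 = ereal G0" using subdiff_finite[OF pg v0] by blast
  have lowb: "ereal (y \<bullet> w0 - G0 + Q y) \<le> \<Phi> y" for y
    using fconj_lower[OF pg G0, of y] unfolding \<Phi>_def
    by (cases "fconj g y") auto
  define M where "M = v0 \<bullet> w0 - G0 + Q v0"
  have \<Phi>v0: "\<Phi> v0 = ereal M" using fconj_subdiff[OF pg v0 G0] by (simp add: \<Phi>_def M_def)
  define T where "T r = {y. \<Phi> y \<le> ereal r}" for r
  have closedT: "closed (T r)" for r
  proof -
    have "T r = (\<Inter>x\<in>{x. g x \<noteq> \<infinity>}. {y. y \<bullet> x - real_of_ereal (g x) + Q y \<le> r})"
      unfolding T_def \<Phi>_def using fconj_le_iff[OF pg] by auto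
    moreover have "closed {y. y \<bullet> x - real_of_ereal (g x) + Q y \<le> r}" for x
      unfolding Q_def using kap by (intro closed_Collect_le continuous_intros) auto
    ultimately show ?thesis by auto
  qed
  have bT: "bounded (T M)"
  proof -
    define a where "a = 2 * \<kappa> * norm w0"
    define b where "b = \<bar>2 * \<kappa> * (M + G0 + norm c * norm w0)\<bar>"
    have "T M \<subseteq> cball c (a + b + 1)"
    proof
      fix y assume "y \<in> T M"
      then have "\<Phi> y \<le> ereal M" unfolding T_def by simp
      then have "ereal (y \<bullet> w0 - G0 + Q y) \<le> ereal M" by (rule order_trans[OF lowb[of y]])
      then have h1: "y \<bullet> w0 - G0 + Q y \<le> M" by simp
      define t where "t = norm (y - c)"
      have "- (y \<bullet> w0) \<le> norm y * norm w0" using Cauchy_Schwarz_ineq2[of y w0] by (simp add: abs_le_iff)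
      also have "norm y \<le> t + norm c" using norm_triangle_ineq[of "y - c" c] by (simp add: t_def)
      then have "norm y * norm w0 \<le> (t + norm c) * norm w0" by (simp add: mult_right_mono)
      finally have h2: "- (y \<bullet> w0) \<le> (t + norm c) * norm w0" .
      have "Q y = t^2 / (2 * \<kappa>)" by (simp add: Q_def t_def)
      with h1 h2 have "t^2 / (2 * \<kappa>) \<le> M + G0 + (t + norm c) * norm w0" by simp
      then have "t^2 \<le> 2 * \<kappa> * (M + G0 + (t + norm c) * norm w0)" using kap by (simp add: divide_le_eq mult.commute)
      also have "\<dots> = a * t + 2 * \<kappa> * (M + G0 + norm c * norm w0)" by (simp add: a_def algebra_simps)
      also have "\<dots> \<le> a * t + b" by (simp add: b_def)
      finally have "t \<le> a + b + 1" using kap by (intro quad_bound) (auto simp: a_def b_def t_def)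
      then show "y \<in> cball c (a + b + 1)" by (simp add: t_def dist_norm norm_minus_commute)
    qed
    then show ?thesis using bounded_cball bounded_subset by blast
  qed
  have cT: "compact (T M)" using bT closedT compact_eq_bounded_closed by blast
  have v0T: "v0 \<in> T M" using \<Phi>v0 by (simp add: T_def)
  define m where "m = (INF y\<in>T M. \<Phi> y)"
  have "T M \<inter> (\<Inter>r\<in>{r. m < ereal r}. T r) \<noteq> {}"
  proof (rule compact_imp_fip_image[OF cT closedT])
    fix I' assume fI: "finite I'" and sI: "I' \<subseteq> {r. m < ereal r}"
    show "T M \<inter> (\<Inter>r\<in>I'. T r) \<noteq> {}"
    proof (cases "I' = {}")
      case True then show ?thesis using v0T by auto
    next
      case False
      define r0 where "r0 = Min I'"
      have "r0 \<in> I'" using fI False by (simp add: r0_def)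
      then have "m < ereal r0" using sI by auto
      then obtain y where y: "y \<in> T M" "\<Phi> y < ereal r0" unfolding m_def by (auto simp: INF_less_iff)
      have "y \<in> T r" if "r \<in> I'" for r
      proof -
        have "r0 \<le> r" using fI that by (simp add: r0_def)
        then have "ereal r0 \<le> ereal r" by simp
        from order.strict_trans2[OF y(2) this] show ?thesis unfolding T_def by simp
      qed
      then show ?thesis using y by auto
    qed
  qed
  then obtain z where zT: "z \<in> T M" and zr: "\<And>r. m < ereal r \<Longrightarrow> z \<in> T r" by blast
  have zm: "\<Phi> z \<le> m"
  proof (rule ccontr)
    assume "\<not> \<Phi> z \<le> m"
    then obtain r where "m < ereal r" "ereal r < \<Phi> z" using ereal_dense2 by (meson not_le)
    then show False using zr[of r] by (auto simp: T_def)
  qed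
  have zmin: "\<Phi> z \<le> \<Phi> w" for w
  proof (cases "w \<in> T M")
    case True
    then have "m \<le> \<Phi> w" unfolding m_def by (rule INF_lower)
    then show ?thesis using zm by simp
  next
    case False
    then have "ereal M < \<Phi> w" by (simp add: T_def)
    moreover have "\<Phi> z \<le> ereal M" using zT by (simp add: T_def)
    ultimately show ?thesis by simp
  qed
  have uniq: "z1 = z2" if m1: "\<forall>w. \<Phi> z1 \<le> \<Phi> w" and m2: "\<forall>w. \<Phi> z2 \<le> \<Phi> w" for z1 z2
  proof -
    have eq: "\<Phi> z1 = \<Phi> z2" using m1 m2 by (simp add: antisym)
    have fin: "\<exists>a. fconj g zz = ereal a" if "\<Phi> zz \<le> ereal M" for zz
    proof -
      have "fconj g zz \<noteq> \<infinity>" using that by (auto simp: \<Phi>_def)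
      moreover have "fconj g zz \<noteq> -\<infinity>" using fconj_lower[OF pg G0, of zz] by auto
      ultimately show ?thesis by (cases "fconj g zz") auto
    qed
    obtain a1 where a1: "fconj g z1 = ereal a1" using fin[of z1] m1 \<Phi>v0 by metis
    obtain a2 where a2: "fconj g z2 = ereal a2" using fin[of z2] m2 \<Phi>v0 by metis
    define mid where "mid = (1/2) *\<^sub>R z1 + (1/2) *\<^sub>R z2"
    have cm: "fconj g mid \<le> ereal ((1/2) * a1 + (1/2) * a2)"
      unfolding mid_def by (rule fconj_convex[OF pg a1 a2]) auto
    have "\<Phi> z1 \<le> \<Phi> mid" using m1 by auto
    then have "ereal (a1 + Q z1) \<le> fconj g mid + ereal (Q mid)" using a1 by (simp add: \<Phi>_def)
    also have "\<dots> \<le> ereal ((1/2) * a1 + (1/2) * a2 + Q mid)" using cm by (cases "fconj g mid") auto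
    finally have i1: "a1 + Q z1 \<le> (1/2) * a1 + (1/2) * a2 + Q mid" by simp
    have i2: "a1 + Q z1 = a2 + Q z2" using eq a1 a2 by (simp add: \<Phi>_def)
    have qm: "Q mid = (Q z1 + Q z2) / 2 - norm (z1 - z2)^2 / (8 * \<kappa>)"
      unfolding Q_def mid_def parallelogram_mid using kap by (simp add: field_simps)
    from i1 i2 qm have "norm (z1 - z2)^2 / (8 * \<kappa>) \<le> 0" by argo
    then have "norm (z1 - z2)^2 \<le> 0" using kap by (simp add: divide_le_0_iff)
    then show ?thesis by simp
  qed
  show ?thesis unfolding \<Phi>_def[symmetric] Q_def[symmetric]
    using zmin uniq by blast
qed



lemma prox_min:
  fixes g :: "'s::euclidean_space \<Rightarrow> ereal"
  assumes pg: "proper_fun g" and v0: "v0 \<in> subdiff g w0" and kap: "\<kappa> > 0"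
  shows "fconj g (prox (fconj g) \<kappa> c) + ereal (norm (prox (fconj g) \<kappa> c - c) ^ 2 / (2 * \<kappa>))
                     \<le> fconj g y + ereal (norm (y - c) ^ 2 / (2 * \<kappa>))"
  using theI'[OF prox_exists_unique[OF pg v0 kap, of c]] unfolding prox_def by blast

lemma quad_ident:
  fixes y w :: "'a::real_inner"
  assumes "\<gamma> > 0"
  shows "norm (y - (1/\<gamma>) *\<^sub>R w)^2 / (2 * (1/\<gamma>)) = \<gamma>/2 * norm y ^ 2 - y \<bullet> w + norm w ^ 2 / (2 * \<gamma>)"
proof -
  have "norm (y - (1/\<gamma>) *\<^sub>R w)^2 = norm y ^ 2 - 2 * (1/\<gamma>) * (y \<bullet> w) + (1/\<gamma>)^2 * norm w ^ 2"
  proof -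
    define c where "c = (1/\<gamma>) *\<^sub>R w"
    have "norm (y - c)^2 = (y - c) \<bullet> (y - c)" by (simp only: power2_norm_eq_inner)
    also have "\<dots> = y \<bullet> y - 2 * (y \<bullet> c) + c \<bullet> c" by (simp add: inner_diff_left inner_diff_right inner_commute)
    also have "y \<bullet> y = norm y ^ 2" by (simp only: power2_norm_eq_inner)
    also have "c \<bullet> c = (1/\<gamma>)^2 * norm w ^ 2" by (simp add: c_def power2_eq_square) (metis dot_square_norm power2_eq_square)
    also have "y \<bullet> c = (1/\<gamma>) * (y \<bullet> w)" by (simp add: c_def)
    finally show ?thesis by (simp add: c_def)
  qed
  then show ?thesis using assms by (simp add: field_simps power2_eq_square)
qed

lemma prox_bound:
  fixes g :: "'s::euclidean_space \<Rightarrow> ereal"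
  assumes pg: "proper_fun g" and v: "v \<in> subdiff g w" and G: "g w = ereal G" and gam: "\<gamma> > 0"
    and z: "z = prox (fconj g) (1/\<gamma>) ((1/\<gamma>) *\<^sub>R w)"
  shows "norm z \<le> norm v"
    and "\<exists>a. fconj g z = ereal a \<and> z \<bullet> w - a - \<gamma>/2 * norm z ^ 2 \<ge> G - \<gamma>/2 * norm v ^ 2"
proof -
  have m: "fconj g z + ereal (norm (z - (1/\<gamma>) *\<^sub>R w) ^ 2 / (2 * (1/\<gamma>)))
       \<le> fconj g v + ereal (norm (v - (1/\<gamma>) *\<^sub>R w) ^ 2 / (2 * (1/\<gamma>)))"
    unfolding z by (rule prox_min[OF pg v]) (use gam in simp)
  have fv: "fconj g v = ereal (v \<bullet> w - G)" by (rule fconj_subdiff[OF pg v G])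
  have lz: "fconj g z \<ge> ereal (z \<bullet> w - G)" by (rule fconj_lower[OF pg G])
  have "fconj g z \<noteq> \<infinity>" using m fv by auto
  moreover have "fconj g z \<noteq> -\<infinity>" using lz by auto
  ultimately obtain a where a: "fconj g z = ereal a" by (cases "fconj g z") auto
  have i1: "a + (\<gamma>/2 * norm z ^ 2 - z \<bullet> w + norm w ^ 2 / (2 * \<gamma>))
         \<le> (v \<bullet> w - G) + (\<gamma>/2 * norm v ^ 2 - v \<bullet> w + norm w ^ 2 / (2 * \<gamma>))"
    using m fv a unfolding quad_ident[OF gam] by simp
  have i2: "a \<ge> z \<bullet> w - G" using lz a by simp
  from i1 i2 have "\<gamma>/2 * norm z ^ 2 \<le> \<gamma>/2 * norm v ^ 2" by argo
  then have "norm z ^ 2 \<le> norm v ^ 2" using gam by simp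
  then show "norm z \<le> norm v" using power2_le_imp_le by fastforce
  show "\<exists>a. fconj g z = ereal a \<and> z \<bullet> w - a - \<gamma>/2 * norm z ^ 2 \<ge> G - \<gamma>/2 * norm v ^ 2"
    using a i1 by (intro exI[of _ a]) argo
qed


theorem lemma4p3:
  fixes S :: "'n::euclidean_space set"
    and A :: "'n \<Rightarrow> 's::euclidean_space" and K :: "'n \<Rightarrow> 'p::euclidean_space"
    and g :: "'s \<Rightarrow> ereal" and f :: "'p \<Rightarrow> ereal"
    and h :: "'n \<Rightarrow> real" and gradh :: "'n \<Rightarrow> 'n" and U :: "'n set" and Lh :: real
    and ell \<beta> \<nu> q \<delta>0 \<theta>0 \<epsilon> :: real
    and x0 :: 'n and z0 :: 's and u0 :: 'n
  assumes S: "S \<noteq> {}" "convex S" "compact S"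
    and lin: "linear A" "linear K"
    and g: "proper_fun g" "convex_fun g" "lsc_fun g"
    and h: "open U" "S \<subseteq> U" "\<forall>x\<in>U. (h has_derivative (\<lambda>v. gradh x \<bullet> v)) (at x)"
           "Lh-lipschitz_on U gradh"
    and f: "proper_fun f" "convex_fun f" "lsc_fun f"
           "K ` S \<subseteq> interior {w. f w < \<infinity>}" "\<forall>x\<in>S. f (K x) > 0"
    and dom: "\<exists>x\<in>S. g (A x) < \<infinity>"
    and alpha: "(INF x\<in>S. g (A x) + ereal (h x)) > 0"
    and subg: "\<forall>x\<in>S. subdiff g (A x) \<noteq> {}" "ell > 0"
              "\<forall>x\<in>S. infdist 0 (subdiff g (A x)) \<le> ell"
    and par: "0 < \<beta>" "\<beta> < 2" "\<nu> > 0" "0 < q" "q < 1" "\<delta>0 > 0" "\<theta>0 > 0" "\<epsilon> > 0"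
    and x0: "x0 \<in> S"
  shows
    "(\<forall>(k::nat) (x::nat \<Rightarrow> 'n) (z::nat \<Rightarrow> 's) (u::nat \<Rightarrow> 'n) (\<gamma>::nat \<Rightarrow> real) (\<delta>::nat \<Rightarrow> real) (\<theta>::nat \<Rightarrow> real).
        x 0 = x0 \<and> z 0 = z0 \<and> u 0 = u0 \<and> \<gamma> 0 = 1 \<and> \<delta> 0 = \<delta>0 \<and> \<theta> 0 = \<theta>0 \<and>
        (\<forall>i<k. fsps_step S A K g h gradh Lh f \<beta> \<nu> q \<epsilon>
                  (x i) (z i) (u i) (\<gamma> i) (\<delta> i) (\<theta> i)
                  (x (Suc i)) (z (Suc i)) (u (Suc i)) (\<gamma> (Suc i)) (\<delta> (Suc i)) (\<theta> (Suc i)))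
        \<longrightarrow> (\<exists>x' z' u' \<gamma>' \<delta>' \<theta>'. fsps_step S A K g h gradh Lh f \<beta> \<nu> q \<epsilon>
                  (x k) (z k) (u k) (\<gamma> k) (\<delta> k) (\<theta> k) x' z' u' \<gamma>' \<delta>' \<theta>'))
     \<and>
     (\<forall>(x::nat \<Rightarrow> 'n) (z::nat \<Rightarrow> 's) (u::nat \<Rightarrow> 'n) (\<gamma>::nat \<Rightarrow> real) (\<delta>::nat \<Rightarrow> real) (\<theta>::nat \<Rightarrow> real).
        x 0 = x0 \<and> z 0 = z0 \<and> u 0 = u0 \<and> \<gamma> 0 = 1 \<and> \<delta> 0 = \<delta>0 \<and> \<theta> 0 = \<theta>0 \<and>
        (\<forall>i. fsps_step S A K g h gradh Lh f \<beta> \<nu> q \<epsilon>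
                  (x i) (z i) (u i) (\<gamma> i) (\<delta> i) (\<theta> i)
                  (x (Suc i)) (z (Suc i)) (u (Suc i)) (\<gamma> (Suc i)) (\<delta> (Suc i)) (\<theta> (Suc i)))
        \<longrightarrow> (\<forall>k. norm (z (Suc k)) \<le> ell + 1)
          \<and> (\<forall>k. \<gamma> (Suc k) \<le> \<gamma> k)
          \<and> (\<exists>\<gamma>c>0. \<exists>K0. \<forall>k\<ge>K0. \<gamma> k = \<gamma>c
                \<and> \<delta> k = 2 * \<nu> + Lh + 2 * (onorm A) ^ 2 / \<gamma>c
                \<and> norm (z (Suc k)) \<le> min (\<epsilon> / \<gamma>c) (sqrt (2 * \<epsilon> / \<gamma>c))))"
proof -
  have Sc: "closed S" using S(3) compact_imp_closed by blast
  have Lh0: "Lh \<ge> 0" using h(4) by (simp add: lipschitz_on_def)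
  obtain a where a0: "0 < a" and aS: "\<And>x. x \<in> S \<Longrightarrow> ereal a \<le> g (A x) + ereal (h x)"
  proof -
    obtain r where r1: "0 < ereal r" and r2: "ereal r < (INF x\<in>S. g (A x) + ereal (h x))"
      using ereal_dense2[OF alpha] by blast
    have "ereal r \<le> g (A x) + ereal (h x)" if "x \<in> S" for x
      using order.trans[OF less_imp_le[OF r2] INF_lower[OF that]] .
    then show ?thesis using that[of r] r1 by auto
  qed
  have vex: "\<exists>v\<in>subdiff g (A x). norm v < ell + 1" if "x \<in> S" for x
  proof -
    have ne: "subdiff g (A x) \<noteq> {}" using subg(1) that by blast
    have "infdist 0 (subdiff g (A x)) < ell + 1" using subg(3) that by fastforce
    then have "(INF v\<in>subdiff g (A x). dist 0 v) < ell + 1" using infdist_notempty[OF ne] by simp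
    then obtain v where "v \<in> subdiff g (A x)" "dist 0 v < ell + 1"
    proof -
      have "bdd_below ((\<lambda>v. dist 0 v) ` subdiff g (A x))" by (rule bdd_belowI2[of _ 0]) simp
      then show ?thesis using that cINF_less_iff[OF ne, of "\<lambda>v. dist 0 v"] \<open>(INF v\<in>subdiff g (A x). dist 0 v) < ell + 1\<close> by blast
    qed
    then show ?thesis by auto
  qed
  have Kfin: "\<exists>F. f (K x) = ereal F \<and> F > 0" if "x \<in> S" for x
  proof -
    have "K x \<in> interior {w. f w < \<infinity>}" using f(4) that by blast
    then have "f (K x) < \<infinity>" using interior_subset by blast
    moreover have "f (K x) > 0" using f(5) that by blast
    ultimately show ?thesis by (cases "f (K x)") auto
  qed
  define \<gamma>s where "\<gamma>s = min (a / (ell + 1)^2) (min (\<epsilon> / (ell + 1)) (\<epsilon> / (ell + 1)^2))"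
  have \<gamma>s0: "\<gamma>s > 0" using a0 subg(2) par(8) by (simp add: \<gamma>s_def)
  have psi_pos: "0 < fsps_Psi S A g h x' (prox (fconj g) (1/\<gamma>1) ((1/\<gamma>1) *\<^sub>R A x')) u' \<delta>' \<gamma>1 / f (K x')"
    if x': "x' \<in> S" and g1: "\<gamma>1 > 0" "\<gamma>1 \<le> \<gamma>s" and d: "\<delta>' \<ge> 0" for x' u' \<delta>' \<gamma>1
  proof -
    define z1 where "z1 = prox (fconj g) (1/\<gamma>1) ((1/\<gamma>1) *\<^sub>R A x')"
    obtain v where v: "v \<in> subdiff g (A x')" "norm v < ell + 1" using vex[OF x'] by blast
    obtain G where G: "g (A x') = ereal G" using subdiff_finite[OF g(1) v(1)] by blast
    obtain a' where a': "fconj g z1 = ereal a'"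
      and ia: "z1 \<bullet> A x' - a' - \<gamma>1/2 * norm z1 ^ 2 \<ge> G - \<gamma>1/2 * norm v ^ 2"
      using prox_bound(2)[OF g(1) v(1) G g1(1) z1_def] by blast
    have aG: "a \<le> G + h x'" using aS[OF x'] G by simp
    have "norm v ^ 2 \<le> (ell + 1)^2" using v(2) by (intro power_mono) auto
    then have "\<gamma>1 * norm v ^ 2 \<le> \<gamma>1 * (ell + 1)^2" using g1 by (simp add: mult_left_mono)
    also have "\<gamma>1 * (ell + 1)^2 \<le> a" using g1(2) subg(2) unfolding \<gamma>s_def by (simp add: le_divide_eq)
    finally have vb: "\<gamma>1/2 * norm v ^ 2 < a" using a0 by simp
    define P where "P = z1 \<bullet> A x' - a' + (h x' + \<delta>' / 2 * norm (x' - u') ^ 2 - \<gamma>1 / 2 * norm z1 ^ 2)"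
    have Psi: "fsps_Psi S A g h x' z1 u' \<delta>' \<gamma>1 = ereal P"
      using x' a' by (simp add: fsps_Psi_def P_def)
    have "\<delta>' / 2 * norm (x' - u') ^ 2 \<ge> 0" using d by simp
    then have P0: "P > 0" using ia aG vb unfolding P_def by argo
    obtain F where F: "f (K x') = ereal F" "F > 0" using Kfin[OF x'] by blast
    show ?thesis using Psi F P0 by (simp add: z1_def[symmetric])
  qed
  have step_ex: "\<exists>x' z' u' \<gamma>' \<delta>' \<theta>'. fsps_step S A K g h gradh Lh f \<beta> \<nu> q \<epsilon> x z u \<gamma> \<delta> \<theta> x' z' u' \<gamma>' \<delta>' \<theta>'"
    if x: "x \<in> S" and gam: "\<gamma> > 0" and d: "\<delta> \<ge> 0" for x z u \<gamma> \<delta> \<theta>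
  proof -
    have "K x \<in> interior {w. f w < \<infinity>}" using f(4) x by blast
    then obtain y where y: "y \<in> subdiff f (K x)" using subdiff_nonempty_interior[OF f(1) f(2)] by blast
    define x' where "x' = closest_point S (u + (\<theta> / \<delta>) *\<^sub>R adjoint K y - (1 / \<delta>) *\<^sub>R gradh x
                                - (1 / \<delta>) *\<^sub>R adjoint A z)"
    define u' where "u' = (1 - \<beta>) *\<^sub>R u + \<beta> *\<^sub>R x'"
    define zc where "zc = (\<lambda>j::nat. prox (fconj g) (1 / (\<gamma> * q ^ j)) ((1 / (\<gamma> * q ^ j)) *\<^sub>R A x'))"
    define th where "th = (\<lambda>j::nat. fsps_Psi S A g h x' (zc j) u' \<delta> (\<gamma> * q ^ j) / f (K x'))"
    define j where "j = (LEAST j. 0 < th j)"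
    define \<gamma>1 where "\<gamma>1 = \<gamma> * q ^ j"
    have x'S: "x' \<in> S" unfolding x'_def by (rule closest_point_in_set[OF Sc S(1)])
    obtain n where n: "q ^ n < \<gamma>s / \<gamma>" using real_arch_pow_inv[of "\<gamma>s / \<gamma>" q] \<gamma>s0 gam par(5) by auto
    have "\<gamma> * q ^ n \<le> \<gamma>s" using n gam by (simp add: less_divide_eq mult.commute)
    moreover have "\<gamma> * q ^ n > 0" using gam par(4) by simp
    ultimately have "0 < th n" unfolding th_def zc_def using psi_pos[OF x'S _ _ d] by blast
    then have thj: "0 < th j" unfolding j_def by (rule LeastI)
    show ?thesis
      unfolding fsps_step_def Let_def
      apply (rule exI[of _ x'], rule exI[of _ "zc j"], rule exI[of _ u'])
      apply (rule exI[of _ "if norm (zc j) > min (\<epsilon> / \<gamma>1) (sqrt (2 * \<epsilon> / \<gamma>1)) then \<gamma>1 * q else \<gamma>1"])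
      apply (rule exI[of _ "2 * \<nu> + Lh + 2 * (onorm A) ^ 2 / (if norm (zc j) > min (\<epsilon> / \<gamma>1) (sqrt (2 * \<epsilon> / \<gamma>1)) then \<gamma>1 * q else \<gamma>1)"])
      apply (rule exI[of _ "real_of_ereal (th j)"])
      apply (rule exI[of _ y])
      using y thj unfolding x'_def u'_def zc_def th_def j_def \<gamma>1_def by simp
  qed
  have step_props: "x' \<in> S \<and> 0 < \<gamma>' \<and> \<gamma>' \<le> \<gamma> \<and> (\<gamma>' = \<gamma> \<or> \<gamma>' \<le> q * \<gamma>)
      \<and> \<delta>' = 2 * \<nu> + Lh + 2 * (onorm A) ^ 2 / \<gamma>' \<and> \<delta>' \<ge> 0 \<and> norm z' \<le> ell + 1
      \<and> (\<gamma> \<le> \<gamma>s \<longrightarrow> \<gamma>' = \<gamma>)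
      \<and> (\<gamma>' = \<gamma> \<longrightarrow> norm z' \<le> min (\<epsilon> / \<gamma>) (sqrt (2 * \<epsilon> / \<gamma>)))"
    if st: "fsps_step S A K g h gradh Lh f \<beta> \<nu> q \<epsilon> x z u \<gamma> \<delta> \<theta> x' z' u' \<gamma>' \<delta>' \<theta>'"
      and gam: "\<gamma> > 0" and d: "\<delta> \<ge> 0" for x z u \<gamma> \<delta> \<theta> x' z' u' \<gamma>' \<delta>' \<theta>'
  proof -
    obtain y where y: "y \<in> subdiff f (K x)"
      and x'def: "x' = closest_point S (u + (\<theta> / \<delta>) *\<^sub>R adjoint K y - (1 / \<delta>) *\<^sub>R gradh x
                                - (1 / \<delta>) *\<^sub>R adjoint A z)"
      and u'def: "u' = (1 - \<beta>) *\<^sub>R u + \<beta> *\<^sub>R x'"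
      and L: "(let zc = (\<lambda>j::nat. prox (fconj g) (1 / (\<gamma> * q ^ j)) ((1 / (\<gamma> * q ^ j)) *\<^sub>R A x'));
             th = (\<lambda>j::nat. fsps_Psi S A g h x' (zc j) u' \<delta> (\<gamma> * q ^ j) / f (K x'));
             j = (LEAST j. 0 < th j);
             \<gamma>1 = \<gamma> * q ^ j
         in 0 < th j \<and> \<theta>' = real_of_ereal (th j) \<and> z' = zc j \<and>
            \<gamma>' = (if norm z' > min (\<epsilon> / \<gamma>1) (sqrt (2 * \<epsilon> / \<gamma>1)) then \<gamma>1 * q else \<gamma>1) \<and>
            \<delta>' = 2 * \<nu> + Lh + 2 * (onorm A) ^ 2 / \<gamma>')"
      using st unfolding fsps_step_def by blast
    define zc where "zc = (\<lambda>j::nat. prox (fconj g) (1 / (\<gamma> * q ^ j)) ((1 / (\<gamma> * q ^ j)) *\<^sub>R A x'))"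
    define th where "th = (\<lambda>j::nat. fsps_Psi S A g h x' (zc j) u' \<delta> (\<gamma> * q ^ j) / f (K x'))"
    define j where "j = (LEAST j. 0 < th j)"
    define \<gamma>1 where "\<gamma>1 = \<gamma> * q ^ j"
    have L2: "z' = zc j" "\<gamma>' = (if norm z' > min (\<epsilon> / \<gamma>1) (sqrt (2 * \<epsilon> / \<gamma>1)) then \<gamma>1 * q else \<gamma>1)"
        "\<delta>' = 2 * \<nu> + Lh + 2 * (onorm A) ^ 2 / \<gamma>'"
      using L unfolding Let_def zc_def th_def j_def \<gamma>1_def by auto
    have x'S: "x' \<in> S" unfolding x'def by (rule closest_point_in_set[OF Sc S(1)])
    have g1: "\<gamma>1 > 0" using gam par(4) by (simp add: \<gamma>1_def)
    have qj: "q ^ j \<le> 1" using par(4,5) by (simp add: power_le_one)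
    have g1le: "\<gamma>1 \<le> \<gamma>" unfolding \<gamma>1_def using qj gam by (simp add: mult_left_le)
    have jpos: "\<gamma>1 \<le> q * \<gamma>" if "j > 0"
    proof -
      have "q ^ j \<le> q ^ 1" using that par(4,5) by (intro power_decreasing) auto
      then show ?thesis unfolding \<gamma>1_def using gam by (simp add: mult.commute mult_left_mono)
    qed
    have gp: "0 < \<gamma>'" using L2(2) g1 par(4) by auto
    have gle: "\<gamma>' \<le> \<gamma>" using L2(2) g1le g1 par(4,5)
      by (auto intro: order.trans[of _ \<gamma>1] simp: mult_left_le)
    have gcase: "\<gamma>' = \<gamma> \<or> \<gamma>' \<le> q * \<gamma>"
    proof (cases "j = 0")
      case True
      then have "\<gamma>1 = \<gamma>" by (simp add: \<gamma>1_def)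
      then show ?thesis using L2(2) by (auto simp: mult.commute)
    next
      case False
      then have "\<gamma>1 \<le> q * \<gamma>" using jpos by simp
      moreover have "\<gamma>1 * q \<le> \<gamma>1" using g1 par(5) by (simp add: mult_left_le)
      ultimately show ?thesis using L2(2) by auto
    qed
    have dnn: "\<delta>' \<ge> 0" using L2(3) gp Lh0 par(3) by simp
    obtain v where v: "v \<in> subdiff g (A x')" "norm v < ell + 1" using vex[OF x'S] by blast
    obtain G where G: "g (A x') = ereal G" using subdiff_finite[OF g(1) v(1)] by blast
    have "\<gamma> * q ^ j > 0" using gam par(4) by simp
    from prox_bound(1)[OF g(1) v(1) G this] have "norm z' \<le> norm v"
      using L2(1) by (simp add: zc_def)
    then have nz: "norm z' \<le> ell + 1" using v(2) by simp
    have mins: "norm z' \<le> min (\<epsilon> / \<gamma>) (sqrt (2 * \<epsilon> / \<gamma>))" if gs: "\<gamma> \<le> \<gamma>s"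
    proof -
      have "\<gamma> * (ell + 1) \<le> \<epsilon>" using gs subg(2) unfolding \<gamma>s_def by (simp add: le_divide_eq)
      then have e1: "ell + 1 \<le> \<epsilon> / \<gamma>" using gam by (simp add: le_divide_eq mult.commute)
      have "\<gamma> * (ell + 1)^2 \<le> \<epsilon>" using gs subg(2) unfolding \<gamma>s_def by (simp add: le_divide_eq)
      then have "(ell + 1)^2 \<le> 2 * \<epsilon> / \<gamma>" using gam par(8) by (simp add: le_divide_eq mult.commute)
      then have e2: "ell + 1 \<le> sqrt (2 * \<epsilon> / \<gamma>)" by (rule real_le_rsqrt)
      show ?thesis using nz e1 e2 by simp
    qed
    have small: "\<gamma>' = \<gamma>" if gs: "\<gamma> \<le> \<gamma>s"
    proof -
      have "0 < th 0" unfolding th_def zc_def using psi_pos[OF x'S _ _ d, of "\<gamma> * q ^ 0"] gam gs by simp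
      then have "j = 0" unfolding j_def by (rule Least_eq_0)
      then have "\<gamma>1 = \<gamma>" by (simp add: \<gamma>1_def)
      then show ?thesis using L2(2) mins[OF gs] by auto
    qed
    have same: "norm z' \<le> min (\<epsilon> / \<gamma>) (sqrt (2 * \<epsilon> / \<gamma>))" if eq: "\<gamma>' = \<gamma>"
    proof -
      have "j = 0"
      proof (rule ccontr)
        assume "j \<noteq> 0"
        then have "\<gamma>1 \<le> q * \<gamma>" using jpos by simp
        moreover have "\<gamma>' \<le> \<gamma>1" using L2(2) g1 par(5) by (auto simp: mult_left_le)
        moreover have "q * \<gamma> < \<gamma>" using gam par(5) by simp
        ultimately show False using eq by simp
      qed
      then have g1e: "\<gamma>1 = \<gamma>" by (simp add: \<gamma>1_def)
      show ?thesis
      proof (rule ccontr)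
        assume "\<not> ?thesis"
        then have "\<gamma>' = \<gamma> * q" using L2(2) g1e by auto
        then show False using eq gam par(5) by simp
      qed
    qed
    show ?thesis using x'S gp gle gcase L2(3) dnn nz small same by blast
  qed
  let ?st = "\<lambda>x z u \<gamma> \<delta> \<theta> i. fsps_step S A K g h gradh Lh f \<beta> \<nu> q \<epsilon>
                  (x i) (z i) (u i) (\<gamma> i) (\<delta> i) (\<theta> i)
                  (x (Suc i)) (z (Suc i)) (u (Suc i)) (\<gamma> (Suc i)) (\<delta> (Suc i)) (\<theta> (Suc i))"
  have inv: "x i \<in> S \<and> 0 < \<gamma> i \<and> 0 \<le> \<delta> i"
    if init: "x 0 = x0" "\<gamma> 0 = 1" "\<delta> 0 = \<delta>0" and sts: "\<forall>i'<k. ?st x z u \<gamma> \<delta> \<theta> i'" and ik: "i \<le> k"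
    for x z u \<gamma> \<delta> \<theta> k i
    using ik
  proof (induction i)
    case 0 then show ?case using init x0 par(6) by simp
  next
    case (Suc i)
    then have st: "?st x z u \<gamma> \<delta> \<theta> i" and iv: "x i \<in> S \<and> 0 < \<gamma> i \<and> 0 \<le> \<delta> i" using sts by auto
    have "0 < \<gamma> i" "0 \<le> \<delta> i" using iv by auto
    from step_props[OF st this] show ?case by blast
  qed
  have partA: "\<forall>(k::nat) (x::nat \<Rightarrow> 'n) (z::nat \<Rightarrow> 's) (u::nat \<Rightarrow> 'n) (\<gamma>::nat \<Rightarrow> real) (\<delta>::nat \<Rightarrow> real) (\<theta>::nat \<Rightarrow> real).
        x 0 = x0 \<and> z 0 = z0 \<and> u 0 = u0 \<and> \<gamma> 0 = 1 \<and> \<delta> 0 = \<delta>0 \<and> \<theta> 0 = \<theta>0 \<and>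
        (\<forall>i<k. ?st x z u \<gamma> \<delta> \<theta> i)
        \<longrightarrow> (\<exists>x' z' u' \<gamma>' \<delta>' \<theta>'. fsps_step S A K g h gradh Lh f \<beta> \<nu> q \<epsilon>
                  (x k) (z k) (u k) (\<gamma> k) (\<delta> k) (\<theta> k) x' z' u' \<gamma>' \<delta>' \<theta>')"
  proof (intro allI impI, elim conjE)
    fix k x z u \<gamma> \<delta> \<theta>
    assume i: "x 0 = x0" "z 0 = z0" "u 0 = u0" "\<gamma> 0 = 1" "\<delta> 0 = \<delta>0" "\<theta> 0 = \<theta>0"
      "\<forall>i<k. ?st x z u \<gamma> \<delta> \<theta> i"
    have "x k \<in> S \<and> 0 < \<gamma> k \<and> 0 \<le> \<delta> k" by (rule inv[OF i(1) i(4) i(5) i(7) order_refl])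
    then have kk: "x k \<in> S" "0 < \<gamma> k" "0 \<le> \<delta> k" by auto
    show "\<exists>x' z' u' \<gamma>' \<delta>' \<theta>'. fsps_step S A K g h gradh Lh f \<beta> \<nu> q \<epsilon>
                  (x k) (z k) (u k) (\<gamma> k) (\<delta> k) (\<theta> k) x' z' u' \<gamma>' \<delta>' \<theta>'"
      by (rule step_ex[OF kk])
  qed
  have partB: "\<forall>(x::nat \<Rightarrow> 'n) (z::nat \<Rightarrow> 's) (u::nat \<Rightarrow> 'n) (\<gamma>::nat \<Rightarrow> real) (\<delta>::nat \<Rightarrow> real) (\<theta>::nat \<Rightarrow> real).
        x 0 = x0 \<and> z 0 = z0 \<and> u 0 = u0 \<and> \<gamma> 0 = 1 \<and> \<delta> 0 = \<delta>0 \<and> \<theta> 0 = \<theta>0 \<and>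
        (\<forall>i. ?st x z u \<gamma> \<delta> \<theta> i)
        \<longrightarrow> (\<forall>k. norm (z (Suc k)) \<le> ell + 1)
          \<and> (\<forall>k. \<gamma> (Suc k) \<le> \<gamma> k)
          \<and> (\<exists>\<gamma>c>0. \<exists>K0. \<forall>k\<ge>K0. \<gamma> k = \<gamma>c
                \<and> \<delta> k = 2 * \<nu> + Lh + 2 * (onorm A) ^ 2 / \<gamma>c
                \<and> norm (z (Suc k)) \<le> min (\<epsilon> / \<gamma>c) (sqrt (2 * \<epsilon> / \<gamma>c)))"
  proof (intro allI impI, elim conjE)
    fix x z u \<gamma> \<delta> \<theta>
    assume init: "x 0 = x0" "z 0 = z0" "u 0 = u0" "\<gamma> 0 = 1" "\<delta> 0 = \<delta>0" "\<theta> 0 = \<theta>0"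
      and sts: "\<forall>i. ?st x z u \<gamma> \<delta> \<theta> i"
    have sts': "\<forall>i<k. ?st x z u \<gamma> \<delta> \<theta> i" for k using sts by blast
    have iv: "x k \<in> S \<and> 0 < \<gamma> k \<and> 0 \<le> \<delta> k" for k
      by (rule inv[OF init(1) init(4) init(5) sts' order_refl])
    have P: "x (Suc k) \<in> S \<and> 0 < \<gamma> (Suc k) \<and> \<gamma> (Suc k) \<le> \<gamma> k \<and> (\<gamma> (Suc k) = \<gamma> k \<or> \<gamma> (Suc k) \<le> q * \<gamma> k)
      \<and> \<delta> (Suc k) = 2 * \<nu> + Lh + 2 * (onorm A) ^ 2 / \<gamma> (Suc k) \<and> \<delta> (Suc k) \<ge> 0 \<and> norm (z (Suc k)) \<le> ell + 1
      \<and> (\<gamma> k \<le> \<gamma>s \<longrightarrow> \<gamma> (Suc k) = \<gamma> k)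
      \<and> (\<gamma> (Suc k) = \<gamma> k \<longrightarrow> norm (z (Suc k)) \<le> min (\<epsilon> / \<gamma> k) (sqrt (2 * \<epsilon> / \<gamma> k)))" for k
    proof -
      have "0 < \<gamma> k" "0 \<le> \<delta> k" using iv[of k] by auto
      from step_props[OF sts[rule_format, of k] this] show ?thesis by blast
    qed
    have Pdec: "\<gamma> (Suc k) \<le> \<gamma> k" for k using P[of k] by blast
    have Pcase: "\<gamma> (Suc k) = \<gamma> k \<or> \<gamma> (Suc k) \<le> q * \<gamma> k" for k using P[of k] by blast
    have Pdel: "\<delta> (Suc k) = 2 * \<nu> + Lh + 2 * (onorm A) ^ 2 / \<gamma> (Suc k)" for k using P[of k] by blast
    have Pz: "norm (z (Suc k)) \<le> ell + 1" for k using P[of k] by blast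
    have Psmall: "\<gamma> k \<le> \<gamma>s \<Longrightarrow> \<gamma> (Suc k) = \<gamma> k" for k using P[of k] by blast
    have Pmin: "\<gamma> (Suc k) = \<gamma> k \<Longrightarrow> norm (z (Suc k)) \<le> min (\<epsilon> / \<gamma> k) (sqrt (2 * \<epsilon> / \<gamma> k))" for k
      using P[of k] by blast
    have dec: "\<gamma> k2 \<le> \<gamma> k1" if "k1 \<le> k2" for k1 k2
      using that
    proof (induction k2 rule: dec_induct)
      case base then show ?case by simp
    next
      case (step n) then show ?case using Pdec[of n] by linarith
    qed
    have stab: "\<exists>K1. \<forall>k\<ge>K1. \<gamma> (Suc k) = \<gamma> k"
    proof (cases "\<exists>k0. \<gamma> k0 \<le> \<gamma>s")
      case True
      then obtain k0 where k0: "\<gamma> k0 \<le> \<gamma>s" by blast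
      have "\<gamma> (Suc k) = \<gamma> k" if "k \<ge> k0" for k
        using Psmall[of k] dec[OF that] k0 by linarith
      then show ?thesis by blast
    next
      case False
      then have gt: "\<gamma>s < \<gamma> k" for k by (meson not_le)
      define L where "L = (INF k. \<gamma> k)"
      have bdd: "bdd_below (range \<gamma>)" by (rule bdd_belowI2[of _ \<gamma>s]) (use gt less_imp_le in blast)
      have Lge: "\<gamma>s \<le> L" unfolding L_def by (rule cINF_greatest) (use gt less_imp_le in auto)
      have Lle: "L \<le> \<gamma> k" for k unfolding L_def by (rule cINF_lower[OF bdd]) simp
      have L0: "L > 0" using Lge \<gamma>s0 by simp
      have "L < L / q" using L0 par(4,5) by (simp add: less_divide_eq)
      then obtain k1 where k1: "\<gamma> k1 < L / q" using cINF_less_iff[of UNIV \<gamma> "L / q"] bdd unfolding L_def by auto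
      have "\<gamma> (Suc k) = \<gamma> k" if "k \<ge> k1" for k
      proof -
        have "\<gamma> k < L / q" using dec[OF that] k1 by simp
        then have "q * \<gamma> k < L" using par(4) by (simp add: less_divide_eq mult.commute)
        then show ?thesis using Pcase[of k] Lle[of "Suc k"] by linarith
      qed
      then show ?thesis by blast
    qed
    then obtain K1 where K1: "\<And>k. k \<ge> K1 \<Longrightarrow> \<gamma> (Suc k) = \<gamma> k" by blast
    have const: "\<gamma> k = \<gamma> K1" if "k \<ge> K1" for k
      using that
    proof (induction k rule: dec_induct)
      case base then show ?case by simp
    next
      case (step n) then show ?case using K1[of n] by simp
    qed
    have part3: "\<exists>\<gamma>c>0. \<exists>K0. \<forall>k\<ge>K0. \<gamma> k = \<gamma>c
                \<and> \<delta> k = 2 * \<nu> + Lh + 2 * (onorm A) ^ 2 / \<gamma>c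
                \<and> norm (z (Suc k)) \<le> min (\<epsilon> / \<gamma>c) (sqrt (2 * \<epsilon> / \<gamma>c))"
    proof (intro exI[of _ "\<gamma> K1"] conjI exI[of _ "Suc K1"] allI impI)
      show "0 < \<gamma> K1" using iv by blast
      fix k assume k: "Suc K1 \<le> k"
      show gk: "\<gamma> k = \<gamma> K1" using const[of k] k by linarith
      obtain k' where k': "k = Suc k'" using k by (cases k) auto
      show "\<delta> k = 2 * \<nu> + Lh + 2 * (onorm A) ^ 2 / \<gamma> K1" using Pdel[of k'] k' gk by simp
      have "\<gamma> (Suc k) = \<gamma> k" using K1[of k] k by linarith
      then show "norm (z (Suc k)) \<le> min (\<epsilon> / \<gamma> K1) (sqrt (2 * \<epsilon> / \<gamma> K1))"
        using Pmin[of k] gk by simp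
    qed
    show "(\<forall>k. norm (z (Suc k)) \<le> ell + 1) \<and> (\<forall>k. \<gamma> (Suc k) \<le> \<gamma> k) \<and> (\<exists>\<gamma>c>0. \<exists>K0. \<forall>k\<ge>K0. \<gamma> k = \<gamma>c
                \<and> \<delta> k = 2 * \<nu> + Lh + 2 * (onorm A) ^ 2 / \<gamma>c
                \<and> norm (z (Suc k)) \<le> min (\<epsilon> / \<gamma>c) (sqrt (2 * \<epsilon> / \<gamma>c)))"
      using Pz Pdec part3 by blast
  qed
  show ?thesis by (rule conjI[OF partA partB])
qed
end
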